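(* Let $\varphi:[0,1]\to[0,\infty)$ be a decreasing function with $\varphi(t)>0$ for $0\le t<1$ and $\lim_{r\to1^-}\varphi(r)=0$. Then there exists a radial weight $\omega=\omega_\varphi$ such that $\widetilde{\omega}\notin\widehat{\mathcal{D}}$ but $A^p\subset A^p_\omega\subset A^p_\varphi$ for all $0<p<\infty$. Moreover, if $\varphi$ is differentiable and satisfies $-\varphi'(t)/\varphi(t)\le C/(1-t)$ for some constant $C>0$ and all $0\le t<1$, then $\varphi$ is a regular weight.
   Context: $\mathbb{D}$ is the unit disc, $\mathcal{H}(\mathbb{D})$ the analytic functions on $\mathbb{D}$, $dA=\frac{dx\,dy}{\pi}$. A radial weight is a non-negative $\omega\in L^1([0,1))$, extended by $\omega(z)=\omega(|z|)$, with $\widehat{\omega}(r)=\int_r^1\omega(s)\,ds>0$ for all $0\le r<1$. For $0<p<\infty$, $A^p_\omega$ is the space of $f\in\mathcal{H}(\mathbb{D})$ with $\int_{\mathbb{D}}|f|^p\omega\,dA<\infty$; $A^p$ denotes $A^p_\omega$ with $\omega\equiv1$. $\widetilde{\omega}(r)=\frac{\widehat{\omega}(r)}{1-r}$. A radial weight $\nu$ belongs to $\widehat{\mathcal{D}}$ if $\nu$ is integrable on $[0,1)$ and there is $C\ge1$ with $\widehat{\nu}(r)\le C\,\widehat{\nu}\big(\frac{1+r}{2}\big)$ for all $0\le r<1$ (so $\widetilde\omega\notin\widehat{\mathcal D}$ means either $\widetilde\omega$ is not integrable or this doubling condition fails). A radial weight $\omega$ is regular if $\omega(r)\asymp\frac{\widehat{\omega}(r)}{1-r}$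 for all $0\le r<1$. *)

theory Defs
  imports "HOL-Analysis.Analysis"
begin

text \<open>Radial weights are functions on [0,1) (real variable r), extended to the disc
by omega(z) = omega(|z|). Integrals on [0,1) are Henstock-Kurzweil integrals of
non-negative functions, hence coincide with Lebesgue integrals.\<close>

definition omega_hat :: "(real \<Rightarrow> real) \<Rightarrow> real \<Rightarrow> real" where
  "omega_hat \<omega> r = integral {r..<1} \<omega>"

definition omega_tilde :: "(real \<Rightarrow> real) \<Rightarrow> real \<Rightarrow> real" where
  "omega_tilde \<omega> r = omega_hat \<omega> r / (1 - r)"

definition radial_weight :: "(real \<Rightarrow> real) \<Rightarrow> bool" where
  "radial_weight \<omega> \<longleftrightarrow>
     (\<forall>r\<in>{0..<1}. 0 \<le> \<omega> r) \<and> \<omega> integrable_on {0..<1} \<and>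
     (\<forall>r\<in>{0..<1}. omega_hat \<omega> r > 0)"

definition D_hat :: "(real \<Rightarrow> real) \<Rightarrow> bool" where
  "D_hat \<nu> \<longleftrightarrow> radial_weight \<nu> \<and>
     (\<exists>C\<ge>1. \<forall>r\<in>{0..<1}. omega_hat \<nu> r \<le> C * omega_hat \<nu> ((1 + r) / 2))"

definition regular_weight :: "(real \<Rightarrow> real) \<Rightarrow> bool" where
  "regular_weight \<omega> \<longleftrightarrow> radial_weight \<omega> \<and>
     (\<exists>C>0. \<forall>r\<in>{0..<1}. omega_tilde \<omega> r \<le> C * \<omega> r \<and> \<omega> r \<le> C * omega_tilde \<omega> r)"

definition bergman :: "real \<Rightarrow> (real \<Rightarrow> real) \<Rightarrow> (complex \<Rightarrow> complex) set" where
  "bergman p \<omega> = {f. f holomorphic_on ball 0 1 \<and>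
     (\<integral>\<^sup>+ z \<in> ball 0 1. ennreal (norm (f z) powr p * \<omega> (norm z) / pi) \<partial>lborel) < \<infinity>}"

end

theory Submission imports Defs begin

lemma ico_integral: "integral {a..<b} (f::real\<Rightarrow>real) = integral {a..b} f"
  by (rule integral_spike_set; rule negligible_subset[OF negligible_sing[of b]]; auto)

lemma ico_integrable: "(f::real\<Rightarrow>real) integrable_on {a..<b} \<longleftrightarrow> f integrable_on {a..b}"
  by (rule integrable_spike_set_eq; rule negligible_subset[OF negligible_sing[of b]]; auto)

lemma lm_Ico: "{c..<d::real} \<in> lmeasurable"
  by (rule bounded_set_imp_lmeasurable) auto

lemma ind_Ico_int:
  assumes "s \<le> c" "c \<le> d" "d \<le> t"
  shows "integral {s..t} (indicator {c..<d} :: real \<Rightarrow> real) = d - c"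
    "(indicator {c..<d} :: real \<Rightarrow> real) integrable_on {s..t}"
proof -
  have e: "{c..<d} \<inter> {s..t} = {c..<d}" using assms by auto
  show "integral {s..t} (indicator {c..<d} :: real \<Rightarrow> real) = d - c"
    by (subst integral_indicator) (use e assms lm_Ico in auto)
  show "(indicator {c..<d} :: real \<Rightarrow> real) integrable_on {s..t}"
    by (subst integrable_on_indicator) (use e lm_Ico in auto)
qed

lemma ind_Icc_int:
  assumes "s \<le> c" "c \<le> d" "d \<le> t"
  shows "integral {s..t} (indicator {c..d} :: real \<Rightarrow> real) = d - c"
    "(indicator {c..d} :: real \<Rightarrow> real) integrable_on {s..t}"
proof -
  have e: "{c..d} \<inter> {s..t} = {c..d}" using assms by auto
  show "integral {s..t} (indicator {c..d} :: real \<Rightarrow> real) = d - c"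
    by (subst integral_indicator) (use e assms in auto)
  show "(indicator {c..d} :: real \<Rightarrow> real) integrable_on {s..t}"
    by (subst integrable_on_indicator) (use e in auto)
qed


definition dd :: "nat \<Rightarrow> real" where "dd k = (1/2)^(k*k)"
definition AA :: "real set" where "AA = (\<Union>k. {1 - dd k ..< 1 - dd k / 2})"
definition om :: "(real \<Rightarrow> real) \<Rightarrow> real \<Rightarrow> real" where "om \<phi> t = \<phi> t + indicator AA t"

lemma dd_pos: "0 < dd k" and dd_le1: "dd k \<le> 1" by (auto simp: dd_def power_le_one)

lemma dd_anti: "j \<le> k \<Longrightarrow> dd k \<le> dd j"
  unfolding dd_def by (rule power_decreasing) (auto intro: mult_le_mono)

lemma dd_le_pow: "dd k \<le> (1/2)^k"
  unfolding dd_def by (rule power_decreasing) (auto simp: le_square)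

lemma dd_Suc: "dd (Suc k) = dd k / (2 * (2^k)^2)"
proof -
  have "Suc k * Suc k = k*k + (2*k + 1)" by simp
  then have "dd (Suc k) = dd k * (1/2)^(2*k+1)" unfolding dd_def by (simp only: power_add)
  also have "(1/2::real)^(2*k+1) = 1 / (2 * (2^k)^2)"
    by (simp add: power_mult power_divide field_simps power2_eq_square power_mult_distrib flip: power_mult power_add)
  finally show ?thesis by simp
qed

lemma AA_sets: "AA \<in> sets lebesgue"
  unfolding AA_def by (intro sets.countable_UN) auto

lemma ind_AA_int: "indicat_real AA integrable_on {a..b}"
  by (subst integrable_on_indicator) (intro bounded_set_imp_lmeasurable sets.Int AA_sets, auto intro: bounded_Int)

lemma ind_AA_J: "1 - dd k \<le> t \<Longrightarrow> t < 1 - dd k / 2 \<Longrightarrow> indicat_real AA t = 1"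
  unfolding AA_def by (auto simp: indicator_def)

lemma AA_gap: assumes "t \<in> AA" "1 - dd k / 2 \<le> t" shows "1 - dd (Suc k) \<le> t"
proof -
  from assms obtain j where j: "1 - dd j \<le> t" "t < 1 - dd j / 2" unfolding AA_def by auto
  show ?thesis
  proof (cases "j \<le> k")
    case True then have "dd k \<le> dd j" by (rule dd_anti)
    with j assms show ?thesis by auto
  next
    case False then have "dd j \<le> dd (Suc k)" by (intro dd_anti) auto
    with j show ?thesis by auto
  qed
qed


context
  fixes \<phi> :: "real \<Rightarrow> real"
  assumes nonneg: "\<forall>t\<in>{0..1}. 0 \<le> \<phi> t"
    and decr: "\<forall>s\<in>{0..1}. \<forall>t\<in>{0..1}. s \<le> t \<longrightarrow> \<phi> t \<le> \<phi> s"
    and pos: "\<forall>t\<in>{0..<1}. 0 < \<phi> t"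
begin

lemma phi_int: "0 \<le> a \<Longrightarrow> b \<le> 1 \<Longrightarrow> \<phi> integrable_on {a..b}"
proof -
  assume ab: "0 \<le> a" "b \<le> 1"
  have "mono_on {a..b} (\<lambda>t. - \<phi> t)"
    using decr ab by (auto simp: mono_on_def)
  then have "(\<lambda>t. - \<phi> t) integrable_on {a..b}" by (rule integrable_on_mono_on)
  then show ?thesis using integrable_neg by fastforce
qed

lemma om_int: "0 \<le> a \<Longrightarrow> b \<le> 1 \<Longrightarrow> om \<phi> integrable_on {a..b}"
  unfolding om_def by (intro integrable_add phi_int ind_AA_int)

lemma om_nonneg: "t \<in> {0..1} \<Longrightarrow> 0 \<le> om \<phi> t"
  using nonneg by (auto simp: om_def)

lemma phi_le_om: "t \<in> {0..1} \<Longrightarrow> \<phi> t \<le> om \<phi> t"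
  by (auto simp: om_def)

lemma om_le: "t \<in> {0..1} \<Longrightarrow> om \<phi> t \<le> \<phi> 0 + 1"
  using decr[rule_format, of 0 t] by (auto simp: om_def indicator_def)

lemma hat_pos:
  assumes f: "\<And>t. t \<in> {0..1} \<Longrightarrow> \<phi> t \<le> f t" and fi: "\<And>a b. 0 \<le> a \<Longrightarrow> b \<le> 1 \<Longrightarrow> f integrable_on {a..b}"
    and r: "r \<in> {0..<1}"
  shows "0 < omega_hat f r"
proof -
  define m where "m = (1 + r) / 2"
  have m: "r < m" "m < 1" using r by (auto simp: m_def)
  have "0 < \<phi> m" using pos m r by auto
  have "integral {r..1} (\<lambda>t. \<phi> m * indicat_real {r..m} t) \<le> integral {r..1} f"
  proof (rule integral_le)
    show "(\<lambda>t. \<phi> m * indicat_real {r..m} t) integrable_on {r..1}"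
      using integrable_cmul[OF ind_Icc_int(2)[of r r m 1], of "\<phi> m"] m by simp
    show "f integrable_on {r..1}" using fi r by auto
    fix t assume t: "t \<in> {r..1}"
    show "\<phi> m * indicat_real {r..m} t \<le> f t"
    proof (cases "t \<le> m")
      case True then show ?thesis using decr[rule_format, of t m] t r m f[of t] by (auto simp: indicator_def)
    next
      case False then show ?thesis using f[of t] nonneg[rule_format, of t] t r by (auto simp: indicator_def)
    qed
  qed
  moreover have "integral {r..1} (\<lambda>t. \<phi> m * indicat_real {r..m} t) = \<phi> m * (m - r)"
    using ind_Icc_int(1)[of r r m 1] m by (simp add: integral_mult_right)
  moreover have "0 < \<phi> m * (m - r)" using \<open>0 < \<phi> m\<close> m by simp
  ultimately show ?thesis unfolding omega_hat_def ico_integral by linarith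
qed

lemma rw_om: "radial_weight (om \<phi>)"
  unfolding radial_weight_def
  using om_nonneg om_int[of 0 1] hat_pos[of "om \<phi>"] phi_le_om om_int
  by (auto simp: ico_integrable)

lemma rw_phi: "radial_weight \<phi>"
  unfolding radial_weight_def
  using nonneg phi_int[of 0 1] hat_pos[of "\<phi>"] phi_int
  by (auto simp: ico_integrable)


lemma tilde_eq: "omega_tilde w s = integral {s..1} w / (1 - s)"
  by (simp add: omega_tilde_def omega_hat_def ico_integral)

lemma H_cont: "continuous_on {0..1} (\<lambda>s. integral {s..1} (om \<phi>))"
  using om_int[of 0 1] by (intro indefinite_integral_continuous_1') auto

lemma H_nonneg: "s \<in> {0..1} \<Longrightarrow> 0 \<le> integral {s..1} (om \<phi>)"
  by (rule integral_nonneg) (use om_int om_nonneg in auto)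

lemma H_le: "s \<in> {0..1} \<Longrightarrow> integral {s..1} (om \<phi>) \<le> (\<phi> 0 + 1) * (1 - s)"
proof -
  assume s: "s \<in> {0..1}"
  have "integral {s..1} (om \<phi>) \<le> integral {s..1} (\<lambda>_. \<phi> 0 + 1)"
    by (rule integral_le) (use om_int s om_le in auto)
  then show ?thesis using s by (simp add: mult.commute)
qed

lemma nu_nonneg: "s \<in> {0..1} \<Longrightarrow> 0 \<le> omega_tilde (om \<phi>) s"
  unfolding tilde_eq using H_nonneg by auto

lemma nu_int: "r \<in> {0..1} \<Longrightarrow> omega_tilde (om \<phi>) integrable_on {r..1}"
proof -
  assume r: "r \<in> {0..1}"
  have "omega_tilde (om \<phi>) integrable_on {r..<1}"
  proof (rule measurable_bounded_by_integrable_imp_integrable_real)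
    have "continuous_on {r..<1} (\<lambda>s. integral {s..1} (om \<phi>) / (1 - s))"
      by (intro continuous_on_divide continuous_on_subset[OF H_cont] continuous_intros) (use r in auto)
    then have "continuous_on {r..<1} (omega_tilde (om \<phi>))"
      by (simp add: tilde_eq[abs_def])
    then show "omega_tilde (om \<phi>) \<in> borel_measurable (lebesgue_on {r..<1})"
      by (rule continuous_imp_measurable_on_sets_lebesgue) auto
    show "(\<lambda>_. \<phi> 0 + 1) integrable_on {r..<1}" by (rule integrable_on_const[OF lm_Ico])
    show "{r..<1} \<in> sets lebesgue" by simp
    fix s assume s: "s \<in> {r..<1}"
    then have s01: "s \<in> {0..1}" using r by auto
    have "integral {s..1} (om \<phi>) / (1 - s) \<le> \<phi> 0 + 1"
      using H_le[OF s01] s by (simp add: divide_le_eq)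
    then have "omega_tilde (om \<phi>) s \<le> \<phi> 0 + 1" by (simp add: tilde_eq)
    then show "\<bar>omega_tilde (om \<phi>) s\<bar> \<le> \<phi> 0 + 1"
      using nu_nonneg[OF s01] by simp
  qed
  then show ?thesis by (simp add: ico_integrable)
qed

lemma nu_lower: "dd k / 16 \<le> integral {1 - dd k..1} (omega_tilde (om \<phi>))"
proof -
  define d where "d = dd k"
  define r where "r = 1 - d"
  define q where "q = 1 - 3 * d / 4"
  define m where "m = 1 - d / 2"
  have d: "0 < d" "d \<le> 1" using dd_pos dd_le1 by (auto simp: d_def)
  have ineq: "0 \<le> r" "r < q" "q < m" "m < 1" using d by (auto simp: r_def q_def m_def)
  have pt: "(1/4) * indicat_real {r..q} s \<le> omega_tilde (om \<phi>) s" if s: "s \<in> {r..1}" for s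
  proof (cases "s \<le> q")
    case True
    have "integral {s..1} (indicat_real {q..<m}) \<le> integral {s..1} (om \<phi>)"
    proof (rule integral_le)
      show "indicat_real {q..<m} integrable_on {s..1}" by (rule ind_Ico_int(2)) (use True ineq in auto)
      show "om \<phi> integrable_on {s..1}" by (rule om_int) (use s ineq in auto)
      fix t assume t: "t \<in> {s..1}"
      show "indicat_real {q..<m} t \<le> om \<phi> t"
      proof (cases "t \<in> {q..<m}")
        case True
        then have "indicat_real AA t = 1"
          by (intro ind_AA_J[of k]) (auto simp: d_def[symmetric] q_def m_def)
        then show ?thesis using True nonneg t s ineq by (auto simp: om_def)
      next
        case False then show ?thesis using om_nonneg[of t] t s ineq by auto
      qed
    qed
    moreover have "integral {s..1} (indicat_real {q..<m}) = m - q"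
      by (rule ind_Ico_int(1)) (use True ineq in auto)
    ultimately have H: "d / 4 \<le> integral {s..1} (om \<phi>)" by (simp add: m_def q_def)
    have s1: "0 < 1 - s" "1 - s \<le> d" using s True ineq by (auto simp: r_def)
    have "(d/4) / d \<le> (d/4) / (1 - s)"
      using s1 d by (intro divide_left_mono) auto
    also have "\<dots> \<le> integral {s..1} (om \<phi>) / (1 - s)"
      using H s1 by (intro divide_right_mono) auto
    finally show ?thesis using True s d by (simp add: tilde_eq)
  next
    case False then show ?thesis using nu_nonneg[of s] s ineq by simp
  qed
  have "integral {r..1} (\<lambda>s. (1/4) * indicat_real {r..q} s) \<le> integral {r..1} (omega_tilde (om \<phi>))"
  proof (rule integral_le)
    show "(\<lambda>s. (1/4) * indicat_real {r..q} s) integrable_on {r..1}"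
      using integrable_cmul[OF ind_Icc_int(2)[of r r q 1], of "1/4"] ineq by simp
    show "omega_tilde (om \<phi>) integrable_on {r..1}" by (rule nu_int) (use ineq in auto)
  qed (use pt in auto)
  moreover have "integral {r..1} (\<lambda>s. (1/4) * indicat_real {r..q} s) = d / 16"
    using ind_Icc_int(1)[of r r q 1] ineq by (simp add: integral_mult_right r_def q_def)
  ultimately show ?thesis by (simp add: r_def d_def)
qed


lemma min_arith:
  fixes I x \<delta> :: real
  assumes "0 < x" "0 < \<delta>" "I \<le> x" "I \<le> \<delta>" "0 \<le> I"
  shows "I / x \<le> 2 * \<delta> / (x + \<delta>)"
proof -
  have "I * (x + \<delta>) \<le> 2 * \<delta> * x"
  proof (cases "x \<le> \<delta>")
    case True
    have "I * (x + \<delta>) \<le> x * (2 * \<delta>)" using assms True by (intro mult_mono) auto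
    then show ?thesis by (simp add: algebra_simps)
  next
    case False
    have "I * (x + \<delta>) \<le> \<delta> * (2 * x)" using assms False by (intro mult_mono) auto
    then show ?thesis by (simp add: algebra_simps)
  qed
  then show ?thesis using assms by (simp add: divide_simps)
qed

lemma nu_upper:
  fixes k :: nat
  defines "d \<equiv> dd k" and "\<delta> \<equiv> dd (Suc k)" and "m \<equiv> 1 - dd k / 2"
  shows "integral {m..1} (omega_tilde (om \<phi>)) \<le> \<phi> m * (1 - m) + 2 * \<delta> * ln ((1 - m + \<delta>) / \<delta>)"
proof -
  have d: "0 < d" "d \<le> 1" "0 < \<delta>" "\<delta> \<le> 1" using dd_pos dd_le1 by (auto simp: d_def \<delta>_def)
  have m: "0 \<le> m" "m < 1" using d by (auto simp: m_def d_def)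
  define g where "g s = \<phi> m + 2 * \<delta> / (1 - s + \<delta>)" for s
  define G where "G s = \<phi> m * s - 2 * \<delta> * ln (1 - s + \<delta>)" for s
  have pt: "omega_tilde (om \<phi>) s \<le> g s" if s: "s \<in> {m..1}" for s
  proof (cases "s = 1")
    case True
    have "0 \<le> \<phi> m" using nonneg m by auto
    then show ?thesis using True d by (simp add: tilde_eq g_def)
  next
    case False
    then have s1: "0 < 1 - s" using s by auto
    have s01: "s \<in> {0..1}" using s m by auto
    have sp: "integral {s..1} (om \<phi>) = integral {s..1} \<phi> + integral {s..1} (indicat_real AA)"
      unfolding om_def by (rule integral_add) (use phi_int s01 ind_AA_int in auto)
    have P: "integral {s..1} \<phi> \<le> \<phi> m * (1 - s)"
    proof -
      have "integral {s..1} \<phi> \<le> integral {s..1} (\<lambda>_. \<phi> m)"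
        by (rule integral_le) (use phi_int s01 s m decr in auto)
      then show ?thesis using s by (simp add: mult.commute)
    qed
    have I0: "0 \<le> integral {s..1} (indicat_real AA)"
      by (rule integral_nonneg) (auto simp: ind_AA_int)
    have I1: "integral {s..1} (indicat_real AA) \<le> 1 - s"
    proof -
      have "integral {s..1} (indicat_real AA) \<le> integral {s..1} (\<lambda>_. 1)"
        by (rule integral_le) (auto simp: ind_AA_int indicator_def)
      then show ?thesis using s by simp
    qed
    have I2: "integral {s..1} (indicat_real AA) \<le> \<delta>"
    proof (cases "s \<le> 1 - \<delta>")
      case True
      have "integral {s..1} (indicat_real AA) \<le> integral {s..1} (indicat_real {1-\<delta>..1})"
      proof (rule integral_le)
        show "indicat_real {1-\<delta>..1} integrable_on {s..1}" by (rule ind_Icc_int(2)) (use True d in auto)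
        fix t assume t: "t \<in> {s..1}"
        show "indicat_real AA t \<le> indicat_real {1-\<delta>..1} t"
        proof (cases "t \<in> AA")
          case True
          then have "1 - \<delta> \<le> t" unfolding \<delta>_def by (rule AA_gap) (use t s in \<open>auto simp: m_def\<close>)
          then show ?thesis using True t by (auto simp: indicator_def)
        qed (auto simp: indicator_def)
      qed (rule ind_AA_int)
      also have "\<dots> = \<delta>" using ind_Icc_int(1)[of s "1-\<delta>" 1 1] True d by simp
      finally show ?thesis .
    next
      case False then show ?thesis using I1 by auto
    qed
    have "omega_tilde (om \<phi>) s = integral {s..1} \<phi> / (1 - s) + integral {s..1} (indicat_real AA) / (1 - s)"
      by (simp add: tilde_eq sp add_divide_distrib)
    also have "integral {s..1} \<phi> / (1 - s) \<le> \<phi> m" using P s1 by (simp add: divide_le_eq)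
    also have "integral {s..1} (indicat_real AA) / (1 - s) \<le> 2 * \<delta> / ((1 - s) + \<delta>)"
      by (rule min_arith) (use s1 d I0 I1 I2 in auto)
    finally show ?thesis by (simp add: g_def)
  qed
  have FTC: "(g has_integral (G 1 - G m)) {m..1}"
  proof (rule fundamental_theorem_of_calculus)
    show "m \<le> 1" using m by simp
    fix s assume s: "s \<in> {m..1}"
    then have pos: "0 < 1 - s + \<delta>" using d by auto
    have "(G has_real_derivative g s) (at s within {m..1})"
      unfolding G_def g_def
      by (rule derivative_eq_intros refl | use pos in simp)+
    then show "(G has_vector_derivative g s) (at s within {m..1})"
      by (simp add: has_real_derivative_iff_has_vector_derivative)
  qed
  have "integral {m..1} (omega_tilde (om \<phi>)) \<le> integral {m..1} g"
    by (rule integral_le) (use nu_int m FTC pt in auto)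
  also have "\<dots> = G 1 - G m" using FTC by (rule integral_unique)
  also have "\<dots> = \<phi> m * (1 - m) + 2 * \<delta> * ln ((1 - m + \<delta>) / \<delta>)"
    using d m by (simp add: G_def ln_div algebra_simps)
  finally show ?thesis .
qed


lemma not_D:
  assumes lim: "(\<phi> \<longlongrightarrow> 0) (at_left 1)"
  shows "\<not> D_hat (omega_tilde (om \<phi>))"
proof
  assume "D_hat (omega_tilde (om \<phi>))"
  then obtain C where C: "C \<ge> 1"
    "\<forall>r\<in>{0..<1}. omega_hat (omega_tilde (om \<phi>)) r \<le> C * omega_hat (omega_tilde (om \<phi>)) ((1 + r) / 2)"
    unfolding D_hat_def by auto
  have "eventually (\<lambda>t. \<phi> t < 1 / (64 * C)) (at_left 1)"
    by (rule order_tendstoD(2)[OF lim]) (use C in auto)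
  then obtain b where b: "b < 1" "\<And>y. b < y \<Longrightarrow> y < 1 \<Longrightarrow> \<phi> y < 1 / (64 * C)"
    unfolding eventually_at_left_field by auto
  have "\<exists>n. (1/2::real)^n < min (1 / (128 * C)) (1 - b)"
    by (rule real_arch_pow_inv) (use b C in auto)
  then obtain k where k: "(1/2::real)^k < 1 / (128 * C)" "(1/2::real)^k < 1 - b" by auto
  define d where "d = dd k"
  define \<delta> where "\<delta> = dd (Suc k)"
  define m where "m = 1 - dd k / 2"
  define y where "y = (2::real)^k"
  have y: "y \<ge> 1" "(1/2::real)^k = 1 / y" by (auto simp: y_def power_one_over)
  have d: "0 < d" "d \<le> 1" "0 < \<delta>" using dd_pos dd_le1 by (auto simp: d_def \<delta>_def)
  have \<delta>d: "\<delta> = d / (2 * y^2)" by (simp add: \<delta>_def d_def dd_Suc y_def)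
  have dk: "d \<le> (1/2)^k" using dd_le_pow by (simp add: d_def)
  have mb: "b < m" "m < 1" using dk k d by (auto simp: m_def d_def)
  have m0: "0 \<le> m" using d by (simp add: m_def d_def[symmetric])
  have phim: "\<phi> m < 1 / (64 * C)" "0 \<le> \<phi> m" using b(2)[OF mb] nonneg mb m0 by auto
  have low: "d / 16 \<le> omega_hat (omega_tilde (om \<phi>)) (1 - d)"
    using nu_lower[of k] by (simp add: omega_hat_def ico_integral d_def)
  have "omega_hat (omega_tilde (om \<phi>)) (1 - d) \<le> C * omega_hat (omega_tilde (om \<phi>)) ((1 + (1 - d)) / 2)"
    using C(2) d by (intro C(2)[rule_format]) auto
  moreover have "(1 + (1 - d)) / 2 = m" by (simp add: m_def d_def)
  ultimately have up0: "d / 16 \<le> C * omega_hat (omega_tilde (om \<phi>)) m" using low by simp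
  have up1: "omega_hat (omega_tilde (om \<phi>)) m \<le> \<phi> m * (1 - m) + 2 * \<delta> * ln ((1 - m + \<delta>) / \<delta>)"
    using nu_upper[of k] by (simp add: omega_hat_def ico_integral m_def \<delta>_def)
  have q: "(1 - m + \<delta>) / \<delta> = 1 + y^2"
    using d y by (simp add: \<delta>d m_def d_def[symmetric] field_simps)
  have "ln (1 + y^2) \<le> ln ((1 + y)^2)"
    using y by (intro ln_mono) (auto simp: power2_eq_square algebra_simps add_pos_nonneg)
  also have "\<dots> = 2 * ln (1 + y)" using y by (simp add: ln_realpow)
  also have "\<dots> \<le> 2 * y" using ln_add_one_self_le_self[of y] y by simp
  finally have lnb: "ln (1 + y^2) \<le> 2 * y" .
  have "2 * \<delta> * ln ((1 - m + \<delta>) / \<delta>) \<le> 2 * \<delta> * (2 * y)"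
    unfolding q using lnb d by (intro mult_left_mono) auto
  also have "\<dots> = 2 * d / y" using y by (simp add: \<delta>d power2_eq_square field_simps)
  finally have t2: "2 * \<delta> * ln ((1 - m + \<delta>) / \<delta>) \<le> 2 * d / y" .
  have t1: "\<phi> m * (1 - m) \<le> (1 / (64 * C)) * (d / 2)"
    using phim d C by (intro mult_mono) (auto simp: m_def d_def)
  have yb: "1 / y < 1 / (128 * C)" using k y by simp
  have "C * omega_hat (omega_tilde (om \<phi>)) m \<le> C * ((1 / (64 * C)) * (d / 2) + 2 * d / y)"
    using up1 t1 t2 C by (intro mult_left_mono) auto
  also have "\<dots> = d / 128 + 2 * d * C * (1 / y)" using C by (simp add: field_simps)
  also have "\<dots> < d / 128 + 2 * d * C * (1 / (128 * C))"
    using yb d C by (intro add_strict_left_mono mult_strict_left_mono) auto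
  also have "\<dots> = 3 * d / 128" using C by (simp add: field_simps)
  finally show False using up0 d by simp
qed

lemma growth:
  assumes der: "\<forall>t\<in>{0..<1}. (\<phi> has_real_derivative \<phi>' t) (at t within {0..<1})"
    and C: "C > 0" "\<forall>t\<in>{0..<1}. - \<phi>' t / \<phi> t \<le> C / (1 - t)"
    and rt: "0 \<le> r" "r \<le> t" "t < 1"
  shows "\<phi> r / (1 - r) powr C \<le> \<phi> t / (1 - t) powr C"
proof (rule DERIV_nonneg_imp_increasing_open[OF rt(2)])
  have "continuous_on {0..<1} \<phi>"
    unfolding continuous_on_eq_continuous_within
    using der DERIV_continuous by blast
  then have "continuous_on {r..t} \<phi>" by (rule continuous_on_subset) (use rt in auto)
  then show "continuous_on {r..t} (\<lambda>x. \<phi> x / (1 - x) powr C)"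
    by (intro continuous_intros) (use rt in auto)
  fix x assume x: "r < x" "x < t"
  then have x01: "x \<in> {0<..<1}" using rt by auto
  have dx: "(\<phi> has_real_derivative \<phi>' x) (at x)"
  proof -
    have "(\<phi> has_real_derivative \<phi>' x) (at x within {0..<1})" using der x01 by auto
    moreover have "at x within {0..<1} = at x" using x01 by (intro at_within_interior) auto
    ultimately show ?thesis by simp
  qed
  have "((\<lambda>x. \<phi> x / (1 - x) powr C) has_real_derivative
   (\<phi>' x * (1 - x) powr C - \<phi> x * (C * (1 - x) powr (C - 1) * (0 - 1))) /
     ((1 - x) powr C * (1 - x) powr C)) (at x)"
    by (rule derivative_eq_intros dx refl | use x01 in simp)+
  moreover have "0 \<le> (\<phi>' x * (1 - x) powr C - \<phi> x * (C * (1 - x) powr (C - 1) * (0 - 1))) /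
     ((1 - x) powr C * (1 - x) powr C)"
  proof -
    have px: "0 < \<phi> x" using pos x01 by auto
    have "- \<phi>' x / \<phi> x \<le> C / (1 - x)" using C x01 by auto
    then have "- \<phi>' x * (1 - x) \<le> C * \<phi> x" using px x01 by (simp add: divide_simps)
    then have "0 \<le> \<phi>' x * (1 - x) + C * \<phi> x" by simp
    then have "0 \<le> (1 - x) powr (C - 1) * (\<phi>' x * (1 - x) + C * \<phi> x)"
      by simp
    also have "(1 - x) powr (C - 1) * (\<phi>' x * (1 - x) + C * \<phi> x)
        = \<phi>' x * (1 - x) powr C - \<phi> x * (C * (1 - x) powr (C - 1) * (0 - 1))"
    proof -
      have "(1 - x) powr C = (1 - x) powr (C - 1) * (1 - x)"
        using x01 by (simp add: powr_diff)
      then show ?thesis by (simp only:) (simp add: algebra_simps)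
    qed
    finally show ?thesis by simp
  qed
  ultimately show "\<exists>y. ((\<lambda>x. \<phi> x / (1 - x) powr C) has_real_derivative y) (at x) \<and> 0 \<le> y" by blast
qed

lemma regular:
  assumes der: "\<forall>t\<in>{0..<1}. (\<phi> has_real_derivative \<phi>' t) (at t within {0..<1})"
    and C: "C > 0" "\<forall>t\<in>{0..<1}. - \<phi>' t / \<phi> t \<le> C / (1 - t)"
  shows "regular_weight \<phi>"
  unfolding regular_weight_def
proof (intro conjI rw_phi exI[of _ "2 * 2 powr C"] ballI)
  show "0 < 2 * 2 powr C" by simp
  have C1: "1 \<le> 2 * 2 powr C" using C ge_one_powr_ge_zero[of 2 C] by simp
  fix r :: real assume r: "r \<in> {0..<1}"
  have pr: "0 < \<phi> r" using pos r by auto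
  have up: "integral {r..1} \<phi> \<le> \<phi> r * (1 - r)"
  proof -
    have "integral {r..1} \<phi> \<le> integral {r..1} (\<lambda>_. \<phi> r)"
      by (rule integral_le) (use phi_int r decr in auto)
    then show ?thesis using r by (simp add: mult.commute)
  qed
  have "omega_tilde \<phi> r \<le> \<phi> r" using up r by (simp add: tilde_eq divide_le_eq)
  also have "\<dots> \<le> 2 * 2 powr C * \<phi> r" using C1 pr by simp
  finally show "omega_tilde \<phi> r \<le> 2 * 2 powr C * \<phi> r" .
  define m where "m = (1 + r) / 2"
  have m: "r < m" "m < 1" using r by (auto simp: m_def)
  have pt: "\<phi> r / 2 powr C \<le> \<phi> t" if t: "t \<in> {r..m}" for t
  proof -
    have g: "\<phi> r / (1 - r) powr C \<le> \<phi> t / (1 - t) powr C"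
      by (rule growth[OF der C]) (use r t m in auto)
    have t1: "0 < 1 - t" "(1 - r) / 2 \<le> 1 - t" using t m by (auto simp: m_def)
    have "\<phi> r / 2 powr C = \<phi> r / (1 - r) powr C * ((1 - r) / 2) powr C"
      using r by (simp add: powr_divide)
    also have "\<dots> \<le> \<phi> r / (1 - r) powr C * (1 - t) powr C"
      using t1 pr r C by (intro mult_left_mono powr_mono2) auto
    also have "\<dots> \<le> \<phi> t / (1 - t) powr C * (1 - t) powr C"
      using g by (intro mult_right_mono) auto
    also have "\<dots> = \<phi> t" using t1 by simp
    finally show ?thesis .
  qed
  have "integral {r..1} (\<lambda>t. \<phi> r / 2 powr C * indicat_real {r..m} t) \<le> integral {r..1} \<phi>"
  proof (rule integral_le)
    show "(\<lambda>t. \<phi> r / 2 powr C * indicat_real {r..m} t) integrable_on {r..1}"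
      using integrable_cmul[OF ind_Icc_int(2)[of r r m 1], of "\<phi> r / 2 powr C"] m by simp
    show "\<phi> integrable_on {r..1}" using phi_int r by auto
    fix t assume t: "t \<in> {r..1}"
    show "\<phi> r / 2 powr C * indicat_real {r..m} t \<le> \<phi> t"
      using pt[of t] nonneg t r by (auto simp: indicator_def)
  qed
  moreover have "integral {r..1} (\<lambda>t. \<phi> r / 2 powr C * indicat_real {r..m} t) = \<phi> r / 2 powr C * (m - r)"
    using ind_Icc_int(1)[of r r m 1] m by (simp add: integral_mult_right)
  ultimately have lo: "\<phi> r / 2 powr C * ((1 - r) / 2) \<le> integral {r..1} \<phi>"
    by (simp add: m_def field_simps)
  show "\<phi> r \<le> 2 * 2 powr C * omega_tilde \<phi> r"
    using lo r by (simp add: tilde_eq field_simps)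
qed

end


lemma bergman_mono:
  assumes "\<And>t. t \<in> {0..<1} \<Longrightarrow> v t \<le> w t"
  shows "bergman p w \<subseteq> bergman p v"
proof
  fix f assume f: "f \<in> bergman p w"
  have "(\<integral>\<^sup>+ z \<in> ball 0 1. ennreal (norm (f z) powr p * v (norm z) / pi) \<partial>lborel)
      \<le> (\<integral>\<^sup>+ z \<in> ball 0 1. ennreal (norm (f z) powr p * w (norm z) / pi) \<partial>lborel)"
  proof (rule nn_integral_mono)
    fix z :: complex
    show "ennreal (norm (f z) powr p * v (norm z) / pi) * indicator (ball 0 1) z
        \<le> ennreal (norm (f z) powr p * w (norm z) / pi) * indicator (ball 0 1) z"
    proof (cases "z \<in> ball 0 1")
      case True
      then have "v (norm z) \<le> w (norm z)" by (intro assms) auto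
      then have "norm (f z) powr p * v (norm z) / pi \<le> norm (f z) powr p * w (norm z) / pi"
        by (intro divide_right_mono mult_left_mono) auto
      then show ?thesis using True by (auto intro: ennreal_leI)
    qed auto
  qed
  then show "f \<in> bergman p v" using f unfolding bergman_def by auto
qed

lemma bergman_bounded:
  assumes p: "p > 0" and B: "\<And>t. t \<in> {0..<1} \<Longrightarrow> w t \<le> B" "B \<ge> 0"
  shows "bergman p (\<lambda>_. 1) \<subseteq> bergman p w"
proof
  fix f assume f: "f \<in> bergman p (\<lambda>_. 1)"
  then have hol: "f holomorphic_on ball 0 1" by (simp add: bergman_def)
  define h where "h z = indicator (ball 0 1) z *\<^sub>R f z" for z :: complex
  have hm: "h \<in> borel_measurable borel"
    unfolding h_def by (rule borel_measurable_continuous_on_indicator)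
      (use hol holomorphic_on_imp_continuous_on in auto)
  then have hm': "h \<in> borel_measurable lborel" by simp
  define G where "G z = ennreal (norm (h z) powr p / pi)" for z
  have Gm: "G \<in> borel_measurable lborel" unfolding G_def using hm' by measurable
  have Geq: "G z = ennreal (norm (f z) powr p * 1 / pi) * indicator (ball 0 1) z" for z
    using p by (auto simp: G_def h_def indicator_def)
  have "(\<integral>\<^sup>+ z \<in> ball 0 1. ennreal (norm (f z) powr p * w (norm z) / pi) \<partial>lborel)
      \<le> (\<integral>\<^sup>+ z. ennreal B * G z \<partial>lborel)"
  proof (rule nn_integral_mono)
    fix z :: complex
    show "ennreal (norm (f z) powr p * w (norm z) / pi) * indicator (ball 0 1) z \<le> ennreal B * G z"
    proof (cases "z \<in> ball 0 1")
      case True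
      then have "w (norm z) \<le> B" by (intro B) auto
      then have "norm (f z) powr p * w (norm z) / pi \<le> B * (norm (f z) powr p * 1 / pi)"
        by (simp add: field_simps mult_right_mono)
      then show ?thesis using True B by (auto simp: Geq ennreal_mult[symmetric] intro: ennreal_leI)
    qed (auto simp: Geq)
  qed
  also have "\<dots> = ennreal B * (\<integral>\<^sup>+ z. G z \<partial>lborel)" by (rule nn_integral_cmult[OF Gm])
  also have "(\<integral>\<^sup>+ z. G z \<partial>lborel) = (\<integral>\<^sup>+ z \<in> ball 0 1. ennreal (norm (f z) powr p * 1 / pi) \<partial>lborel)"
    by (simp add: Geq)
  finally have "(\<integral>\<^sup>+ z \<in> ball 0 1. ennreal (norm (f z) powr p * w (norm z) / pi) \<partial>lborel) < \<infinity>"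
    using f by (auto simp: bergman_def ennreal_mult_less_top order.strict_trans1)
  then show "f \<in> bergman p w" using hol by (simp add: bergman_def)
qed


theorem theorem7:
  fixes \<phi> :: "real \<Rightarrow> real"
  assumes nonneg: "\<forall>t\<in>{0..1}. 0 \<le> \<phi> t"
    and decr: "\<forall>s\<in>{0..1}. \<forall>t\<in>{0..1}. s \<le> t \<longrightarrow> \<phi> t \<le> \<phi> s"
    and pos: "\<forall>t\<in>{0..<1}. 0 < \<phi> t"
    and lim: "(\<phi> \<longlongrightarrow> 0) (at_left 1)"
  shows "(\<exists>\<omega>. radial_weight \<omega> \<and> \<not> D_hat (omega_tilde \<omega>) \<and>
            (\<forall>p>0. bergman p (\<lambda>_. 1) \<subseteq> bergman p \<omega> \<and> bergman p \<omega> \<subseteq> bergman p \<phi>))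
       \<and> (\<forall>\<phi>'. ((\<forall>t\<in>{0..<1}. (\<phi> has_real_derivative \<phi>' t) (at t within {0..<1})) \<and>
                (\<exists>C>0. \<forall>t\<in>{0..<1}. - \<phi>' t / \<phi> t \<le> C / (1 - t)))
              \<longrightarrow> regular_weight \<phi>)"
proof (intro conjI allI impI)
  show "\<exists>\<omega>. radial_weight \<omega> \<and> \<not> D_hat (omega_tilde \<omega>) \<and>
            (\<forall>p>0. bergman p (\<lambda>_. 1) \<subseteq> bergman p \<omega> \<and> bergman p \<omega> \<subseteq> bergman p \<phi>)"
  proof (intro exI[of _ "om \<phi>"] conjI allI impI)
    show "radial_weight (om \<phi>)" by (rule rw_om[OF nonneg decr pos])
    show "\<not> D_hat (omega_tilde (om \<phi>))" by (rule not_D[OF nonneg decr pos lim])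
    fix p :: real assume p: "p > 0"
    have "0 \<le> \<phi> 0" using nonneg by auto
    then show "bergman p (\<lambda>_. 1) \<subseteq> bergman p (om \<phi>)"
      using om_le[OF nonneg decr pos] by (intro bergman_bounded[OF p, of _ "\<phi> 0 + 1"]) auto
    show "bergman p (om \<phi>) \<subseteq> bergman p \<phi>"
      using phi_le_om[OF nonneg decr pos] by (intro bergman_mono) auto
  qed
  fix \<phi>' :: "real \<Rightarrow> real"
  assume h: "(\<forall>t\<in>{0..<1}. (\<phi> has_real_derivative \<phi>' t) (at t within {0..<1})) \<and>
                (\<exists>C>0. \<forall>t\<in>{0..<1}. - \<phi>' t / \<phi> t \<le> C / (1 - t))"
  then obtain C where "C > 0" "\<forall>t\<in>{0..<1}. - \<phi>' t / \<phi> t \<le> C / (1 - t)" by auto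
  then show "regular_weight \<phi>" using h by (intro regular[OF nonneg decr pos]) auto
qed

end
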